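(* Let $X_1,\dots,X_n$ be real-valued random variables and let $f_1,\dots,f_M$ be (entrywise) non-decreasing functions on $\mathbb R^n$. For each $j\in\{1,\dots,M\}$ let $Y_j=f_j(X_1,\dots,X_n)$. If $(X_1,\dots,X_n)\uparrow^{\mathrm{st}}Y_j$, then $(Y_1,\dots,Y_M)$ is PRDS on the subset $\{j\}$.
   Context: For vectors, $x\preceq y$ means $x_i\le y_i$ for all $i$; a function $f$ is non-decreasing if $x\preceq y$ implies $f(x)\le f(y)$. A random vector $X$ is stochastically increasing in a random variable $Y$, written $X\uparrow^{\mathrm{st}}Y$, if the regular conditional probability $\Pr(X\in\cdot\mid Y=y)$ exists and for every bounded non-decreasing function $g$, $y\mapsto\mathbb E[g(X)\mid Y=y]$ is non-decreasing. A set $D\subset\mathbb R^m$ is non-decreasing if $x\preceq y$, $x\in D$ imply $y\in D$. A random vector $Y\in\mathbb R^m$ is PRDS on $T\subset\{1,\dots,m\}$ if $t\mapsto\Pr(Y\in D\mid Y_i=t)$ is non-decreasing for every non-decreasing set $D$ and every $i\in T$. *)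

theory Defs
  imports "HOL-Probability.Probability"
begin

definition vle :: "real^'n \<Rightarrow> real^'n \<Rightarrow> bool" where
  "vle x y \<longleftrightarrow> (\<forall>i. x $ i \<le> y $ i)"

definition nondecr_fun :: "(real^'n \<Rightarrow> real) \<Rightarrow> bool" where
  "nondecr_fun g \<longleftrightarrow> (\<forall>x y. vle x y \<longrightarrow> g x \<le> g y)"

definition nondecr_set :: "(real^'n) set \<Rightarrow> bool" where
  "nondecr_set D \<longleftrightarrow> (\<forall>x y. vle x y \<longrightarrow> x \<in> D \<longrightarrow> y \<in> D)"

text \<open>kappa is a regular conditional distribution of X given Y (a Markov kernel
  disintegrating the joint law of (X,Y) against the law of Y).\<close>
definition is_rcd :: "'a measure \<Rightarrow> ('a \<Rightarrow> real^'n) \<Rightarrow> ('a \<Rightarrow> real)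
    \<Rightarrow> (real \<Rightarrow> (real^'n) measure) \<Rightarrow> bool" where
  "is_rcd M X Y \<kappa> \<longleftrightarrow>
     X \<in> borel_measurable M \<and> Y \<in> borel_measurable M \<and>
     (\<forall>y. prob_space (\<kappa> y) \<and> sets (\<kappa> y) = sets borel) \<and>
     (\<forall>A\<in>sets borel. (\<lambda>y. emeasure (\<kappa> y) A) \<in> borel_measurable borel) \<and>
     (\<forall>A\<in>sets borel. \<forall>B\<in>sets borel.
        emeasure M {\<omega>\<in>space M. X \<omega> \<in> A \<and> Y \<omega> \<in> B}
        = (\<integral>\<^sup>+ y. indicator B y * emeasure (\<kappa> y) A \<partial>(distr M borel Y)))"

definition stoch_incr :: "'a measure \<Rightarrow> ('a \<Rightarrow> real^'n) \<Rightarrow> ('a \<Rightarrow> real) \<Rightarrow> bool" where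
  "stoch_incr M X Y \<longleftrightarrow> (\<exists>\<kappa>. is_rcd M X Y \<kappa> \<and>
     (\<forall>g. g \<in> borel_measurable borel \<longrightarrow> bounded (range g) \<longrightarrow> nondecr_fun g \<longrightarrow>
        mono (\<lambda>y. \<integral>x. g x \<partial>(\<kappa> y))))"

definition PRDS :: "'a measure \<Rightarrow> ('a \<Rightarrow> real^'m) \<Rightarrow> 'm set \<Rightarrow> bool" where
  "PRDS M Y T \<longleftrightarrow> (\<forall>i\<in>T. \<exists>\<kappa>. is_rcd M Y (\<lambda>\<omega>. Y \<omega> $ i) \<kappa> \<and>
     (\<forall>D\<in>sets borel. nondecr_set D \<longrightarrow> mono (\<lambda>t. measure (\<kappa> t) D)))"

end

theory Submission
  imports Defs
begin

lemma vm: fixes f :: "'m::finite \<Rightarrow> real^'n \<Rightarrow> real"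
  shows "(\<And>k. f k \<in> borel_measurable borel) \<Longrightarrow> (\<lambda>x. \<chi> k. f k x) \<in> borel_measurable borel"
  apply (rule iffD2[OF borel_measurable_euclidean_space])
  apply (auto simp: Basis_vec_def inner_axis cart_eq_inner_axis[symmetric])
  done

theorem theorem3:
  fixes M :: "'a measure" and X :: "'a \<Rightarrow> real^'n"
    and f :: "'m::finite \<Rightarrow> real^'n \<Rightarrow> real" and j :: 'm
  assumes "prob_space M"
    and "X \<in> borel_measurable M"
    and "\<And>k. f k \<in> borel_measurable borel"
    and "\<And>k. nondecr_fun (f k)"
    and "stoch_incr M X (\<lambda>\<omega>. f j (X \<omega>))"
  shows "PRDS M (\<lambda>\<omega>. \<chi> k. f k (X \<omega>)) {j}"
proof -
  define F where "F = (\<lambda>x. \<chi> k. f k x)"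
  have Fm: "F \<in> borel_measurable borel" unfolding F_def by (rule vm[OF assms(3)])
  have Fmono: "vle x y \<Longrightarrow> vle (F x) (F y)" for x y
    using assms(4) unfolding F_def vle_def nondecr_fun_def by (simp add: vle_def)
  obtain \<kappa> where rcd: "is_rcd M X (\<lambda>\<omega>. f j (X \<omega>)) \<kappa>"
    and mon: "\<And>g. g \<in> borel_measurable borel \<Longrightarrow> bounded (range g) \<Longrightarrow> nondecr_fun g \<Longrightarrow>
        mono (\<lambda>y. \<integral>x. g x \<partial>(\<kappa> y))"
    using assms(5) unfolding stoch_incr_def by blast
  define \<kappa>' where "\<kappa>' y = distr (\<kappa> y) borel F" for y
  have ps: "prob_space (\<kappa> y)" and sk: "sets (\<kappa> y) = sets borel" for y
    using rcd unfolding is_rcd_def by auto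
  have spk: "space (\<kappa> y) = UNIV" for y using sets_eq_imp_space_eq[OF sk[of y]] by simp
  have Fm': "F \<in> \<kappa> y \<rightarrow>\<^sub>M borel" for y using Fm measurable_cong_sets[OF sk[of y] refl] by blast
  have pre: "F -` A \<in> sets borel" if "A \<in> sets borel" for A
    using measurable_sets[OF Fm that] by simp
  have em: "emeasure (\<kappa>' y) A = emeasure (\<kappa> y) (F -` A)" if "A \<in> sets borel" for y A
    unfolding \<kappa>'_def using emeasure_distr[OF Fm' that] spk by simp
  have meq: "measure (\<kappa>' y) A = measure (\<kappa> y) (F -` A)" if "A \<in> sets borel" for y A
    unfolding \<kappa>'_def using measure_distr[OF Fm' that] spk by simp
  have Y: "(\<lambda>\<omega>. (\<chi> k. f k (X \<omega>)) $ j) = (\<lambda>\<omega>. f j (X \<omega>))" by simp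
  have "is_rcd M (\<lambda>\<omega>. \<chi> k. f k (X \<omega>)) (\<lambda>\<omega>. (\<chi> k. f k (X \<omega>)) $ j) \<kappa>'"
    unfolding Y is_rcd_def
  proof (intro conjI allI ballI)
    show "(\<lambda>\<omega>. \<chi> k. f k (X \<omega>)) \<in> borel_measurable M"
      using measurable_comp[OF assms(2) Fm] unfolding F_def o_def by simp
    show "(\<lambda>\<omega>. f j (X \<omega>)) \<in> borel_measurable M"
      using rcd unfolding is_rcd_def by blast
    fix y
    show "prob_space (\<kappa>' y)" unfolding \<kappa>'_def
      by (rule prob_space.prob_space_distr[OF ps Fm'])
    show "sets (\<kappa>' y) = sets borel" unfolding \<kappa>'_def by simp
  next
    fix A :: "(real^'m) set" assume A: "A \<in> sets borel"
    show "(\<lambda>y. emeasure (\<kappa>' y) A) \<in> borel_measurable borel"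
      using rcd pre[OF A] unfolding em[OF A] is_rcd_def by blast
  next
    fix A :: "(real^'m) set" and B :: "real set" assume A: "A \<in> sets borel" and B: "B \<in> sets borel"
    have "emeasure M {\<omega> \<in> space M. (\<chi> k. f k (X \<omega>)) \<in> A \<and> f j (X \<omega>) \<in> B}
        = emeasure M {\<omega> \<in> space M. X \<omega> \<in> F -` A \<and> f j (X \<omega>) \<in> B}"
      unfolding F_def by simp
    also have "\<dots> = (\<integral>\<^sup>+ y. indicator B y * emeasure (\<kappa> y) (F -` A) \<partial>(distr M borel (\<lambda>\<omega>. f j (X \<omega>))))"
      using rcd pre[OF A] B unfolding is_rcd_def by blast
    finally show "emeasure M {\<omega> \<in> space M. (\<chi> k. f k (X \<omega>)) \<in> A \<and> f j (X \<omega>) \<in> B}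
        = (\<integral>\<^sup>+ y. indicator B y * emeasure (\<kappa>' y) A \<partial>(distr M borel (\<lambda>\<omega>. f j (X \<omega>))))"
      using em[OF A] by simp
  qed
  moreover have "mono (\<lambda>t. measure (\<kappa>' t) D)" if D: "D \<in> sets borel" "nondecr_set D" for D
  proof -
    define g :: "real^'n \<Rightarrow> real" where "g = indicator (F -` D)"
    have "g \<in> borel_measurable borel" unfolding g_def using pre[OF D(1)] by simp
    moreover have "bounded (range g)"
      by (rule bounded_subset[of "{0,1}"]) (auto simp: g_def indicator_def)
    moreover have "nondecr_fun g"
      unfolding nondecr_fun_def g_def indicator_def
      using Fmono D(2) unfolding nondecr_set_def by fastforce
    ultimately have "mono (\<lambda>y. \<integral>x. g x \<partial>(\<kappa> y))" by (rule mon)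
    moreover have "(\<integral>x. g x \<partial>(\<kappa> y)) = measure (\<kappa>' y) D" for y
    proof -
      interpret prob_space "\<kappa> y" by (rule ps)
      have "F -` D \<in> sets (\<kappa> y)" using pre[OF D(1)] sk by simp
      then show ?thesis unfolding g_def meq[OF D(1)] by simp
    qed
    ultimately show ?thesis by simp
  qed
  ultimately show ?thesis unfolding PRDS_def by blast
qed

end
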